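(* If $D$ is an algebraic curve in $\mathbb{CP}^2$ of degree $d$, then for every $n\ge0$ the pullback $(R^n)^*D$ is a divisor of degree $d\cdot4^n$.
   Context: $R[U:V:W]=[(U^2+V^2)^2:V^2(U+W)^2:(V^2+W^2)^2]$ on $\mathbb{CP}^2$. For a rational map $S$ of $\mathbb{CP}^2$ with reduced homogeneous polynomial lift $\hat S$ (components without common factor) and a curve $D=\{p=0\}$ given by a homogeneous polynomial $p$, the pullback $S^*D$ is the divisor $\{p\circ\hat S=0\}$ counted with multiplicities; here $S=R^n$. *)

theory Defs
  imports Complex_Main "HOL-Library.Poly_Mapping" "HOL-Library.Product_Plus"
begin

text \<open>Polynomials in the three homogeneous coordinates U, V, W of CP^2 with complex
coefficients: finitely supported maps from exponent triples (a,b,c), standing for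
the monomial U^a V^b W^c, to coefficients.\<close>

type_synonym mpoly3 = "(nat \<times> nat \<times> nat) \<Rightarrow>\<^sub>0 complex"

definition const3 :: "complex \<Rightarrow> mpoly3" where
  "const3 c = Poly_Mapping.single (0,0,0) c"

definition varU :: mpoly3 where "varU = Poly_Mapping.single (1,0,0) 1"
definition varV :: mpoly3 where "varV = Poly_Mapping.single (0,1,0) 1"
definition varW :: mpoly3 where "varW = Poly_Mapping.single (0,0,1) 1"

definition homogeneous3 :: "nat \<Rightarrow> mpoly3 \<Rightarrow> bool" where
  "homogeneous3 d p \<longleftrightarrow> (\<forall>(a,b,c) \<in> Poly_Mapping.keys p. a + b + c = d)"

definition subst3 :: "mpoly3 \<Rightarrow> mpoly3 \<times> mpoly3 \<times> mpoly3 \<Rightarrow> mpoly3" where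
  "subst3 p F = (case F of (f,g,h) \<Rightarrow>
     (\<Sum>(a,b,c) \<in> Poly_Mapping.keys p.
        const3 (Poly_Mapping.lookup p (a,b,c)) * f ^ a * g ^ b * h ^ c))"

definition comp3 :: "mpoly3 \<times> mpoly3 \<times> mpoly3 \<Rightarrow> mpoly3 \<times> mpoly3 \<times> mpoly3
                     \<Rightarrow> mpoly3 \<times> mpoly3 \<times> mpoly3" where
  "comp3 S T = (case S of (s0,s1,s2) \<Rightarrow> (subst3 s0 T, subst3 s1 T, subst3 s2 T))"

definition Rhat :: "mpoly3 \<times> mpoly3 \<times> mpoly3" where
  "Rhat = ((varU^2 + varV^2)^2, varV^2 * (varU + varW)^2, (varV^2 + varW^2)^2)"

text \<open>A polynomial lift of R^n obtained by naive composition (possibly non-reduced).\<close>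
primrec Rlift_iter :: "nat \<Rightarrow> mpoly3 \<times> mpoly3 \<times> mpoly3" where
  "Rlift_iter 0 = (varU, varV, varW)"
| "Rlift_iter (Suc n) = comp3 Rhat (Rlift_iter n)"

text \<open>G is a reduced homogeneous polynomial lift of the rational map R^n:
its components are homogeneous of a common degree, not all zero, have no
common non-unit factor, and G defines the same rational map as the naive lift
(the triples are proportional, i.e. all 2x2 cross products agree).\<close>
definition reduced_lift_Rn :: "nat \<Rightarrow> mpoly3 \<times> mpoly3 \<times> mpoly3 \<Rightarrow> bool" where
  "reduced_lift_Rn n G = (case G of (g0,g1,g2) \<Rightarrow> case Rlift_iter n of (f0,f1,f2) \<Rightarrow>
     (\<exists>k. homogeneous3 k g0 \<and> homogeneous3 k g1 \<and> homogeneous3 k g2)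
     \<and> (g0 \<noteq> 0 \<or> g1 \<noteq> 0 \<or> g2 \<noteq> 0)
     \<and> (\<forall>h. h dvd g0 \<and> h dvd g1 \<and> h dvd g2 \<longrightarrow> h dvd 1)
     \<and> g0 * f1 = g1 * f0 \<and> g0 * f2 = g2 * f0 \<and> g1 * f2 = g2 * f1)"

text \<open>The pullback S^*D of D = {p = 0} is the divisor of p o S^ (S^ a reduced lift).
The degree of the divisor of a nonzero homogeneous polynomial q is its degree.\<close>

end

theory Submission
  imports Defs "HOL-Computational_Algebra.Polynomial_Factorial" "HOL-Computational_Algebra.Field_as_Ring"
begin

lemma pm_expand: "(p::'k \<Rightarrow>\<^sub>0 'a::comm_monoid_add) = (\<Sum>k\<in>Poly_Mapping.keys p. Poly_Mapping.single k (Poly_Mapping.lookup p k))"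
proof (rule poly_mapping_eqI)
  fix x
  show "Poly_Mapping.lookup p x = Poly_Mapping.lookup (\<Sum>k\<in>Poly_Mapping.keys p. Poly_Mapping.single k (Poly_Mapping.lookup p k)) x"
    by (simp add: lookup_sum lookup_single when_def in_keys_iff sum.delta)
qed

locale hxl =
  fixes cc :: "complex \<Rightarrow> 'b::comm_ring_1" and mm :: "nat\<times>nat\<times>nat \<Rightarrow> 'b"
  assumes c0: "cc 0 = 0" and cadd: "cc (x+y) = cc x + cc y" and cmul: "cc (x*y) = cc x * cc y"
    and c1: "cc 1 = 1" and m0: "mm 0 = 1" and madd: "mm (k+l) = mm k * mm l"
begin
definition H :: "mpoly3 \<Rightarrow> 'b" where
  "H p = (\<Sum>k\<in>Poly_Mapping.keys p. cc (Poly_Mapping.lookup p k) * mm k)"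

lemma H_superset: "finite S \<Longrightarrow> Poly_Mapping.keys p \<subseteq> S \<Longrightarrow> H p = (\<Sum>k\<in>S. cc (Poly_Mapping.lookup p k) * mm k)"
  unfolding H_def by (rule sum.mono_neutral_left) (auto simp: in_keys_iff c0)

lemma H_add: "H (p+q) = H p + H q"
proof -
  let ?S = "Poly_Mapping.keys p \<union> Poly_Mapping.keys q"
  have "H (p+q) = (\<Sum>k\<in>?S. cc (Poly_Mapping.lookup (p+q) k) * mm k)"
    by (rule H_superset) (auto simp: keys_add)
  also have "\<dots> = (\<Sum>k\<in>?S. cc (Poly_Mapping.lookup p k) * mm k) + (\<Sum>k\<in>?S. cc (Poly_Mapping.lookup q k) * mm k)"
    by (simp add: lookup_add cadd distrib_right sum.distrib)
  also have "\<dots> = H p + H q"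
    using H_superset[of ?S p] H_superset[of ?S q] by auto
  finally show ?thesis .
qed

lemma H_zero: "H 0 = 0" by (simp add: H_def)

lemma H_single: "H (Poly_Mapping.single k a) = cc a * mm k"
  by (cases "a = 0") (simp_all add: H_def c0)

lemma H_sum: "H (sum f A) = (\<Sum>x\<in>A. H (f x))"
  by (induction A rule: infinite_finite_induct) (simp_all add: H_zero H_add)

lemma H_mult: "H (p*q) = H p * H q"
proof -
  have "p*q = (\<Sum>k\<in>Poly_Mapping.keys p. Poly_Mapping.single k (Poly_Mapping.lookup p k)) *
              (\<Sum>l\<in>Poly_Mapping.keys q. Poly_Mapping.single l (Poly_Mapping.lookup q l))"
    using pm_expand[of p] pm_expand[of q] by simp
  also have "\<dots> = (\<Sum>k\<in>Poly_Mapping.keys p. \<Sum>l\<in>Poly_Mapping.keys q.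
       Poly_Mapping.single (k+l) (Poly_Mapping.lookup p k * Poly_Mapping.lookup q l))"
    by (simp add: sum_product mult_single)
  finally have "H (p*q) = (\<Sum>k\<in>Poly_Mapping.keys p. \<Sum>l\<in>Poly_Mapping.keys q.
       (cc (Poly_Mapping.lookup p k) * mm k) * (cc (Poly_Mapping.lookup q l) * mm l))"
    by (simp add: H_sum H_single cmul madd mult_ac)
  also have "\<dots> = H p * H q" by (simp add: H_def sum_product)
  finally show ?thesis .
qed

lemma H_one: "H 1 = 1"
proof -
  have "H (Poly_Mapping.single 0 1) = 1" by (simp only: H_single c1 m0) simp
  then show ?thesis by (simp only: single_one)
qed

lemma H_pow: "H (p^n) = H p ^ n"
  by (induction n) (simp_all add: H_one H_mult)
end

lemma const3_single: "const3 c = Poly_Mapping.single 0 c" by (simp add: const3_def zero_prod_def)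
lemma const3_0[simp]: "const3 0 = 0" by (simp add: const3_single)
lemma const3_1[simp]: "const3 1 = 1" by (simp add: const3_single)
lemma const3_add: "const3 (x+y) = const3 x + const3 y" by (simp add: const3_single single_add)
lemma const3_mult: "const3 (x*y) = const3 x * const3 y" by (simp add: const3_single mult_single)
lemma const3_pow: "const3 (x^n) = const3 x ^ n" by (induction n) (simp_all add: const3_mult)

lemma hxl_sub: "hxl const3 (\<lambda>(a,b,c). f^a*g^b*h^c)"
  by unfold_locales (auto simp: const3_add const3_mult zero_prod_def power_add split: prod.splits)

lemma subst3_H: "subst3 p (f,g,h) = hxl.H const3 (\<lambda>(a,b,c). f^a*g^b*h^c) p"
  unfolding subst3_def hxl.H_def[OF hxl_sub] by (auto intro!: sum.cong simp: mult.assoc)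

lemma subst3_expl: "subst3 p (f,g,h) = (\<Sum>k\<in>Poly_Mapping.keys p.
   const3 (Poly_Mapping.lookup p k) * (f^fst k * g^fst (snd k) * h^snd (snd k)))"
  unfolding subst3_def by (auto intro!: sum.cong simp: mult.assoc)

lemma single_pow3: "Poly_Mapping.single (a,b,c) (1::complex) ^ n = Poly_Mapping.single (n*a,n*b,n*c) 1"
  by (induction n) (simp_all add: mult_single flip: single_one zero_prod_def)

lemma subst3_add: "subst3 (p+q) F = subst3 p F + subst3 q F"
  by (cases F) (simp add: subst3_H hxl.H_add[OF hxl_sub])
lemma subst3_mult: "subst3 (p*q) F = subst3 p F * subst3 q F"
  by (cases F) (simp add: subst3_H hxl.H_mult[OF hxl_sub])
lemma subst3_pow: "subst3 (p^n) F = subst3 p F ^ n"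
  by (cases F) (simp add: subst3_H hxl.H_pow[OF hxl_sub])
lemma subst3_zero: "subst3 0 F = 0"
  by (cases F) (simp add: subst3_H hxl.H_zero[OF hxl_sub])
lemma subst3_one: "subst3 1 F = 1"
  by (cases F) (simp add: subst3_H hxl.H_one[OF hxl_sub])
lemma subst3_sum: "subst3 (sum f A) F = (\<Sum>x\<in>A. subst3 (f x) F)"
  by (cases F) (simp add: subst3_H hxl.H_sum[OF hxl_sub])
lemma subst3_single: "subst3 (Poly_Mapping.single (a,b,c) z) (f,g,h) = const3 z * f^a*g^b*h^c"
  unfolding subst3_H hxl.H_single[OF hxl_sub] by (simp add: mult.assoc)
lemma subst3_const: "subst3 (const3 z) F = const3 z"
  by (cases F) (simp add: const3_def subst3_single)
lemma subst3_U: "subst3 varU (f,g,h) = f" by (simp add: varU_def subst3_single)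
lemma subst3_V: "subst3 varV (f,g,h) = g" by (simp add: varV_def subst3_single)
lemma subst3_W: "subst3 varW (f,g,h) = h" by (simp add: varW_def subst3_single)

lemma subst3_comp:
  "subst3 (subst3 p (f,g,h)) F = subst3 p (subst3 f F, subst3 g F, subst3 h F)"
  by (cases F) (simp add: subst3_expl[of p] subst3_sum subst3_mult subst3_pow subst3_const)

lemma subst3_id: "subst3 p (varU,varV,varW) = p"
proof -
  have "subst3 p (varU,varV,varW) = (\<Sum>k\<in>Poly_Mapping.keys p. Poly_Mapping.single k (Poly_Mapping.lookup p k))"
    unfolding subst3_def
    by (auto intro!: sum.cong simp: varU_def varV_def varW_def const3_def mult_single single_pow3 split: prod.splits)
  then show ?thesis using pm_expand[of p] by simp
qed

type_synonym T3 = "complex poly poly poly"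

lemma hxl_phi: "hxl (\<lambda>z. [:[:[:z:]:]:] :: T3) (\<lambda>(a,b,c). monom (monom (monom 1 a) c) b)"
  by unfold_locales (auto simp: mult_monom zero_prod_def one_pCons monom_0 split: prod.splits)

lemma coeff_if0: "coeff (if P then x else 0) n = (if P then coeff x n else 0)" by simp

lemma coeff_monom3: "coeff (coeff (coeff (monom (monom (monom x a') c') b') b) c) a =
   (if (a',b',c') = (a,b,c) then x else 0)"
  by (auto simp: coeff_monom)

definition phi :: "mpoly3 \<Rightarrow> T3" where
  "phi = hxl.H (\<lambda>z. [:[:[:z:]:]:] :: T3) (\<lambda>(a,b,c). monom (monom (monom 1 a) c) b)"

lemma phi_add: "phi (p+q) = phi p + phi q" unfolding phi_def by (rule hxl.H_add[OF hxl_phi])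
lemma phi_mult: "phi (p*q) = phi p * phi q" unfolding phi_def by (rule hxl.H_mult[OF hxl_phi])
lemma phi_pow: "phi (p^n) = phi p ^ n" unfolding phi_def by (rule hxl.H_pow[OF hxl_phi])
lemma phi_zero[simp]: "phi 0 = 0" unfolding phi_def by (rule hxl.H_zero[OF hxl_phi])
lemma phi_one[simp]: "phi 1 = 1" unfolding phi_def by (rule hxl.H_one[OF hxl_phi])
lemma phi_single: "phi (Poly_Mapping.single (a,b,c) z) = monom (monom (monom z a) c) b"
  unfolding phi_def hxl.H_single[OF hxl_phi] by (simp add: smult_monom)
lemma phi_const3: "phi (const3 z) = [:[:[:z:]:]:]"
  by (simp add: const3_def phi_single monom_0)

lemma phi_coeff: "coeff (coeff (coeff (phi p) b) c) a = Poly_Mapping.lookup p (a,b,c)"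
proof -
  have "phi p = (\<Sum>k\<in>Poly_Mapping.keys p. monom (monom (monom (Poly_Mapping.lookup p k) (fst k)) (snd (snd k))) (fst (snd k)))"
    unfolding phi_def hxl.H_def[OF hxl_phi] by (auto intro!: sum.cong simp: smult_monom split: prod.splits)
  then have "coeff (coeff (coeff (phi p) b) c) a = (\<Sum>k\<in>Poly_Mapping.keys p.
      coeff (coeff (coeff (monom (monom (monom (Poly_Mapping.lookup p k) (fst k)) (snd (snd k))) (fst (snd k))) b) c) a)"
    by (simp only: coeff_sum)
  also have "\<dots> = (\<Sum>k\<in>Poly_Mapping.keys p. if k = (a,b,c) then Poly_Mapping.lookup p k else 0)"
    by (rule sum.cong) (auto simp: coeff_monom3 prod_eq_iff)
  also have "\<dots> = Poly_Mapping.lookup p (a,b,c)"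
    by (simp add: sum.delta in_keys_iff)
  finally show ?thesis .
qed

lemma phi_inj: "phi p = phi q \<Longrightarrow> p = q"
  by (rule poly_mapping_eqI) (metis phi_coeff prod_cases3)

lemma phi_eq_0: "phi p = 0 \<longleftrightarrow> p = 0"
  using phi_inj[of p 0] by auto

lemma phi_U: "phi varU = [:[:[:0,1:]:]:]"
  by (simp add: varU_def phi_single monom_Suc monom_0)
lemma phi_V: "phi varV = [:0,1:]"
  by (simp add: varV_def phi_single monom_Suc monom_0 one_pCons)
lemma phi_W: "phi varW = [:[:0,1:]:]"
  by (simp add: varW_def phi_single monom_Suc monom_0 one_pCons)

lemma pCons_split: "pCons x (a::'a::comm_ring_1 poly) = [:x:] + [:0,1:] * a"
  by simp

lemma surj1: "\<exists>p. phi p = [:[:a:]:]"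
proof (induction a)
  case 0 show ?case by (rule exI[of _ 0]) simp
next
  case (pCons x a)
  then obtain p where p: "phi p = [:[:a:]:]" by blast
  have "[:[:pCons x a:]:] = [:[:[:x:]:]:] + [:[:[:0,1:]:]:] * [:[:a:]:]"
    by (subst pCons_split) simp
  also have "\<dots> = phi (const3 x + varU * p)" by (simp add: phi_add phi_mult phi_const3 phi_U p)
  finally show ?case by metis
qed

lemma surj2: "\<exists>p. phi p = [:b:]"
proof (induction b)
  case 0 show ?case by (rule exI[of _ 0]) simp
next
  case (pCons x a)
  then obtain p where p: "phi p = [:a:]" by blast
  obtain q where q: "phi q = [:[:x:]:]" using surj1 by blast
  have "[:pCons x a:] = [:[:x:]:] + [:[:0,1:]:] * [:a:]"
    by (subst pCons_split) simp
  also have "\<dots> = phi (q + varW * p)" by (simp add: phi_add phi_mult phi_W p q)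
  finally show ?case by metis
qed

lemma phi_surj: "\<exists>p. phi p = P"
proof (induction P)
  case 0 show ?case by (rule exI[of _ 0]) simp
next
  case (pCons x a)
  then obtain p where p: "phi p = a" by blast
  obtain q where q: "phi q = [:x:]" using surj2 by blast
  have "pCons x a = [:x:] + [:0,1:] * a"
    by (subst pCons_split) simp
  also have "\<dots> = phi (q + varV * p)" by (simp add: phi_add phi_mult phi_V p q)
  finally show ?case by metis
qed

lemma mp_mult_eq_0: "(p::mpoly3) * q = 0 \<longleftrightarrow> p = 0 \<or> q = 0"
  by (metis mult_eq_0_iff phi_eq_0 phi_mult mult_zero_left mult_zero_right)

lemma mp_mult_cancel: "(a::mpoly3) \<noteq> 0 \<Longrightarrow> a * b = a * c \<Longrightarrow> b = c"
  by (metis phi_inj phi_mult phi_eq_0 mult_cancel_left)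

lemma phi_dvd: "phi p dvd phi q \<longleftrightarrow> p dvd q"
proof
  assume "phi p dvd phi q"
  then obtain R where "phi q = phi p * R" by (auto elim: dvdE)
  moreover obtain r where "phi r = R" using phi_surj by blast
  ultimately have "q = p * r" by (metis phi_inj phi_mult)
  then show "p dvd q" by auto
next
  assume "p dvd q" then show "phi p dvd phi q" by (metis dvdE dvdI phi_mult)
qed

lemma phi_unit: "is_unit (phi p) \<longleftrightarrow> p dvd 1"
  using phi_dvd[of p 1] by simp

lemma T3_unit: "is_unit (P::T3) \<longleftrightarrow> (\<exists>z. z \<noteq> 0 \<and> P = [:[:[:z:]:]:])"
  by (auto simp: is_unit_poly_iff dvd_field_iff)

lemma mp_unit: "(p::mpoly3) dvd 1 \<longleftrightarrow> (\<exists>z. z \<noteq> 0 \<and> p = const3 z)"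
proof
  assume "p dvd 1"
  then obtain z where z: "z \<noteq> 0" "phi p = [:[:[:z:]:]:]" using phi_unit T3_unit by blast
  then have "phi p = phi (const3 z)" by (simp add: phi_const3)
  then show "\<exists>z. z \<noteq> 0 \<and> p = const3 z" using z phi_inj by blast
next
  assume "\<exists>z. z \<noteq> 0 \<and> p = const3 z"
  then obtain z where "z \<noteq> 0" "p = const3 z" by blast
  then show "p dvd 1" using phi_unit[of p] T3_unit[of "phi p"] by (auto simp: phi_const3)
qed

definition deg3 :: "nat\<times>nat\<times>nat \<Rightarrow> nat" where "deg3 k = fst k + fst (snd k) + snd (snd k)"
lemma deg3_add: "deg3 (k+l) = deg3 k + deg3 l"
  by (cases k; cases l) (simp add: deg3_def)
lemma deg3_0: "deg3 0 = 0" by (simp add: deg3_def zero_prod_def)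

lemma hom_iff: "homogeneous3 d p \<longleftrightarrow> (\<forall>k\<in>Poly_Mapping.keys p. deg3 k = d)"
  by (auto simp: homogeneous3_def deg3_def)

lemma hom_0: "homogeneous3 d 0" by (simp add: hom_iff)
lemma hom_add: "homogeneous3 d p \<Longrightarrow> homogeneous3 d q \<Longrightarrow> homogeneous3 d (p+q)"
  using keys_add[of p q] by (auto simp: hom_iff)
lemma hom_mult: "homogeneous3 d p \<Longrightarrow> homogeneous3 e q \<Longrightarrow> homogeneous3 (d+e) (p*q)"
  unfolding hom_iff
proof (intro ballI impI)
  fix k assume "\<forall>k\<in>Poly_Mapping.keys p. deg3 k = d" "\<forall>k\<in>Poly_Mapping.keys q. deg3 k = e"
    "k \<in> Poly_Mapping.keys (p*q)"
  moreover obtain a b where "k = a+b" "a \<in> Poly_Mapping.keys p" "b \<in> Poly_Mapping.keys q"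
    using keys_mult[of p q] \<open>k \<in> Poly_Mapping.keys (p*q)\<close> by blast
  ultimately show "deg3 k = d+e" by (simp add: deg3_add)
qed
lemma hom_one: "homogeneous3 0 1" by (simp add: hom_iff deg3_0)
lemma hom_pow: "homogeneous3 d p \<Longrightarrow> homogeneous3 (n*d) (p^n)"
  by (induction n) (simp_all add: hom_one hom_mult)
lemma hom_const: "homogeneous3 0 (const3 z)"
  by (simp add: hom_iff const3_def deg3_def)
lemma hom_sum: "(\<And>x. x\<in>A \<Longrightarrow> homogeneous3 d (f x)) \<Longrightarrow> homogeneous3 d (sum f A)"
  by (induction A rule: infinite_finite_induct) (simp_all add: hom_0 hom_add)
lemma hom_U: "homogeneous3 1 varU" by (simp add: hom_iff varU_def deg3_def)
lemma hom_V: "homogeneous3 1 varV" by (simp add: hom_iff varV_def deg3_def)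
lemma hom_W: "homogeneous3 1 varW" by (simp add: hom_iff varW_def deg3_def)

lemma hom_subst:
  assumes "homogeneous3 d p" "homogeneous3 k f" "homogeneous3 k g" "homogeneous3 k h"
  shows "homogeneous3 (d*k) (subst3 p (f,g,h))"
  unfolding subst3_expl
proof (rule hom_sum)
  fix x assume x: "x \<in> Poly_Mapping.keys p"
  then have dx: "fst x + fst (snd x) + snd (snd x) = d" using assms(1) by (auto simp: hom_iff deg3_def)
  have "homogeneous3 (0 + (fst x * k + fst (snd x) * k + snd (snd x) * k))
     (const3 (Poly_Mapping.lookup p x) * (f ^ fst x * g ^ fst (snd x) * h ^ snd (snd x)))"
    by (intro hom_mult hom_const hom_pow assms)
  moreover have "0 + (fst x * k + fst (snd x) * k + snd (snd x) * k) = d * k"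
  proof -
    have "fst x * k + fst (snd x) * k + snd (snd x) * k = (fst x + fst (snd x) + snd (snd x)) * k"
      by (simp only: distrib_right)
    then show ?thesis using dx by simp
  qed
  ultimately show "homogeneous3 (d*k) (const3 (Poly_Mapping.lookup p x) * (f ^ fst x * g ^ fst (snd x) * h ^ snd (snd x)))"
    by simp
qed

lemma subst3_scale:
  assumes "homogeneous3 d p"
  shows "subst3 p (const3 z * f, const3 z * g, const3 z * h) = const3 (z^d) * subst3 p (f,g,h)"
  unfolding subst3_expl sum_distrib_left
proof (rule sum.cong[OF refl])
  fix x assume x: "x \<in> Poly_Mapping.keys p"
  then have dx: "fst x + fst (snd x) + snd (snd x) = d" using assms(1) by (auto simp: hom_iff deg3_def)
  have "const3 z ^ fst x * const3 z ^ fst (snd x) * const3 z ^ snd (snd x) = const3 (z^d)"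
    by (simp add: const3_pow flip: power_add dx)
  then show "const3 (Poly_Mapping.lookup p x) * ((const3 z * f) ^ fst x * (const3 z * g) ^ fst (snd x) * (const3 z * h) ^ snd (snd x)) =
         const3 (z ^ d) * (const3 (Poly_Mapping.lookup p x) * (f ^ fst x * g ^ fst (snd x) * h ^ snd (snd x)))"
  proof -
    have "(const3 z * f) ^ fst x * (const3 z * g) ^ fst (snd x) * (const3 z * h) ^ snd (snd x)
      = (const3 z ^ fst x * const3 z ^ fst (snd x) * const3 z ^ snd (snd x)) * (f ^ fst x * g ^ fst (snd x) * h ^ snd (snd x))"
      by (simp only: power_mult_distrib mult_ac)
    then show ?thesis using \<open>const3 z ^ fst x * const3 z ^ fst (snd x) * const3 z ^ snd (snd x) = const3 (z^d)\<close>
      by (simp only: mult_ac)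
  qed
qed

type_synonym T4 = "complex poly poly poly poly"

lemma hxl_sm: "hxl (\<lambda>z. [:[:[:[:z:]:]:]:] :: T4) (\<lambda>(a,b,c). monom (monom (monom (monom 1 a) c) b) (a+b+c))"
  by unfold_locales (auto simp: mult_monom zero_prod_def one_pCons monom_0 ac_simps split: prod.splits)

definition sm :: "mpoly3 \<Rightarrow> T4" where
  "sm = hxl.H (\<lambda>z. [:[:[:[:z:]:]:]:] :: T4) (\<lambda>(a,b,c). monom (monom (monom (monom 1 a) c) b) (a+b+c))"

lemma sm_mult: "sm (p*q) = sm p * sm q" unfolding sm_def by (rule hxl.H_mult[OF hxl_sm])

lemma coeff_monom4: "coeff (coeff (coeff (coeff (monom (monom (monom (monom x a') c') b') j') j) b) c) a =
   (if (a',b',c') = (a,b,c) \<and> j' = j then x else 0)"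
  by (auto simp: coeff_monom)

lemma sm_coeff: "coeff (coeff (coeff (coeff (sm p) j) b) c) a =
   (if a+b+c = j then Poly_Mapping.lookup p (a,b,c) else 0)"
proof -
  have "sm p = (\<Sum>k\<in>Poly_Mapping.keys p. monom (monom (monom (monom (Poly_Mapping.lookup p k) (fst k)) (snd (snd k))) (fst (snd k))) (fst k + fst (snd k) + snd (snd k)))"
    unfolding sm_def hxl.H_def[OF hxl_sm] by (auto intro!: sum.cong simp: smult_monom split: prod.splits)
  then have "coeff (coeff (coeff (coeff (sm p) j) b) c) a = (\<Sum>k\<in>Poly_Mapping.keys p.
      coeff (coeff (coeff (coeff (monom (monom (monom (monom (Poly_Mapping.lookup p k) (fst k)) (snd (snd k))) (fst (snd k))) (fst k + fst (snd k) + snd (snd k))) j) b) c) a)"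
    by (simp only: coeff_sum)
  also have "\<dots> = (\<Sum>k\<in>Poly_Mapping.keys p. if k = (a,b,c) then (if a+b+c = j then Poly_Mapping.lookup p k else 0) else 0)"
    by (rule sum.cong) (auto simp: coeff_monom4 prod_eq_iff)
  also have "\<dots> = (if a+b+c = j then Poly_Mapping.lookup p (a,b,c) else 0)"
    by (simp add: sum.delta in_keys_iff)
  finally show ?thesis .
qed

lemma sm_coeff_nz: "(a,b,c) \<in> Poly_Mapping.keys p \<Longrightarrow> coeff (sm p) (a+b+c) \<noteq> 0"
proof
  assume "(a,b,c) \<in> Poly_Mapping.keys p" "coeff (sm p) (a+b+c) = 0"
  then have "coeff (coeff (coeff (coeff (sm p) (a+b+c)) b) c) a = 0" by simp
  with \<open>(a,b,c) \<in> Poly_Mapping.keys p\<close> show False by (simp add: sm_coeff in_keys_iff)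
qed

lemma sm_hom:
  assumes "homogeneous3 d f" "f \<noteq> 0"
  shows "\<exists>X. X \<noteq> 0 \<and> sm f = monom X d"
proof -
  have z: "coeff (sm f) j = 0" if "j \<noteq> d" for j
  proof -
    have "coeff (coeff (coeff (coeff (sm f) j) b) c) a = 0" for a b c
      using assms(1) that by (auto simp: sm_coeff homogeneous3_def) (metis (mono_tags, lifting) case_prodD in_keys_iff)
    then show ?thesis by (simp add: poly_eq_iff)
  qed
  obtain k where k: "k \<in> Poly_Mapping.keys f" using assms(2) by (metis keys_eq_empty all_not_in_conv)
  obtain a b c where abc: "k = (a,b,c)" by (cases k) auto
  have "a+b+c = d" using assms(1) k abc by (auto simp: homogeneous3_def)
  then have nz: "coeff (sm f) d \<noteq> 0" using sm_coeff_nz k abc by blast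
  have "sm f = monom (coeff (sm f) d) d"
    by (rule poly_eqI) (auto simp: coeff_monom z)
  with nz show ?thesis by blast
qed

lemma dvd_monom_is_monom:
  fixes P Q :: "'a::idom poly"
  assumes "P * Q = monom X d" "X \<noteq> 0"
  shows "\<exists>Y e. P = monom Y e"
proof -
  have PQ: "P \<noteq> 0" "Q \<noteq> 0" using assms by auto
  have om: "order 0 (monom X d) = d"
    using assms(2) order_power_n_n[of 0 d] by (simp add: monom_altdef order_smult)
  have "order 0 P + order 0 Q = d" using order_mult[of P Q 0] assms om by simp
  moreover have "degree P + degree Q = d" using degree_mult_eq[OF PQ] assms by (simp add: degree_monom_eq)
  moreover have "order 0 P \<le> degree P" "order 0 Q \<le> degree Q" using PQ order_degree by auto
  ultimately have e: "order 0 P = degree P" by linarith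
  obtain R where R: "P = [:0,1:] ^ degree P * R" using order_1[of 0 P] e by (auto elim: dvdE)
  have "R \<noteq> 0" using R PQ by auto
  then have "degree P = degree P + degree R" using R by (metis degree_linear_power degree_mult_eq power_not_zero pCons_eq_0_iff one_neq_zero)
  then have "degree R = 0" by simp
  then have "R = [:coeff R 0:]" by (rule degree_0_id[symmetric])
  then have "P = [:coeff R 0:] * [:0,1:] ^ degree P" using R by (metis mult.commute)
  then have "P = monom (coeff R 0) (degree P)" by (simp add: monom_altdef)
  then show ?thesis by blast
qed

lemma hom_divisor:
  assumes "h * k = f" "f \<noteq> 0" "homogeneous3 d f"
  shows "\<exists>e. homogeneous3 e h"
proof -
  obtain X where X: "X \<noteq> 0" "sm f = monom X d" using sm_hom assms(2,3) by blast
  then have "sm h * sm k = monom X d" using assms(1) sm_mult by metis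
  then obtain Y e where Y: "sm h = monom Y e" using dvd_monom_is_monom X(1) by blast
  have "homogeneous3 e h"
    unfolding homogeneous3_def
  proof (clarify)
    fix a b c assume "(a,b,c) \<in> Poly_Mapping.keys h"
    then have "coeff (sm h) (a+b+c) \<noteq> 0" by (rule sm_coeff_nz)
    then show "a+b+c = e" using Y by (auto simp: coeff_monom split: if_splits)
  qed
  then show ?thesis by blast
qed

definition rho :: "mpoly3 \<Rightarrow> mpoly3" where "rho f = subst3 f (varU, 0, varW)"

lemma rho_add: "rho (p+q) = rho p + rho q" by (simp add: rho_def subst3_add)
lemma rho_mult: "rho (p*q) = rho p * rho q" by (simp add: rho_def subst3_mult)
lemma rho_pow: "rho (p^n) = rho p ^ n" by (simp add: rho_def subst3_pow)
lemma rho_const: "rho (const3 z) = const3 z" by (simp add: rho_def subst3_const)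
lemma rho_zero: "rho 0 = 0" by (simp add: rho_def subst3_zero)
lemma rho_sum: "rho (sum f A) = (\<Sum>x\<in>A. rho (f x))" by (simp add: rho_def subst3_sum)

lemma R_step: "Rlift_iter (Suc n) = (case Rlift_iter n of (a,b,c) \<Rightarrow> ((a^2+b^2)^2, b^2*(a+c)^2, (b^2+c^2)^2))"
  by (cases "Rlift_iter n") (simp add: comp3_def Rhat_def subst3_add subst3_mult subst3_pow subst3_U subst3_V subst3_W)

lemma hom_cong: "homogeneous3 d p \<Longrightarrow> d = e \<Longrightarrow> homogeneous3 e p" by simp

lemma U_pow: "varU ^ n = Poly_Mapping.single (n,0,0) 1" by (simp add: varU_def single_pow3)
lemma W_pow: "varW ^ n = Poly_Mapping.single (0,0,n) 1" by (simp add: varW_def single_pow3)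

lemma mp_pow_nz: "(f::mpoly3) \<noteq> 0 \<Longrightarrow> f ^ n \<noteq> 0"
  by (induction n) (auto simp: mp_mult_eq_0)

lemma R_props:
  "case Rlift_iter n of (a,b,c) \<Rightarrow>
     homogeneous3 (4^n) a \<and> homogeneous3 (4^n) b \<and> homogeneous3 (4^n) c \<and>
     rho a = varU^(4^n) \<and> rho b = 0 \<and> rho c = varW^(4^n) \<and> b \<noteq> 0"
proof (induction n)
  case 0
  have "varV \<noteq> 0" unfolding varV_def by (metis lookup_single_eq lookup_zero one_neq_zero)
  then show ?case using hom_U hom_V hom_W by (simp add: rho_def subst3_U subst3_V subst3_W)
next
  case (Suc n)
  obtain a b c where abc: "Rlift_iter n = (a,b,c)" by (cases "Rlift_iter n") auto
  let ?N = "(4::nat)^n"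
  have IH: "homogeneous3 ?N a" "homogeneous3 ?N b" "homogeneous3 ?N c" "rho a = varU^?N" "rho b = 0"
    "rho c = varW^?N" "b \<noteq> 0" using Suc abc by auto
  have e: "(4::nat)^Suc n = 2*(2*?N)" "(4::nat)^Suc n = 2*?N + 2*?N" by simp_all
  have h1: "homogeneous3 (4^Suc n) ((a^2+b^2)^2)"
    unfolding e(1) by (intro hom_pow hom_add IH)
  have h2: "homogeneous3 (4^Suc n) (b^2*(a+c)^2)"
    unfolding e(2) by (intro hom_mult hom_pow hom_add IH)
  have h3: "homogeneous3 (4^Suc n) ((b^2+c^2)^2)"
    unfolding e(1) by (intro hom_pow hom_add IH)
  have r1: "rho ((a^2+b^2)^2) = varU^(4^Suc n)"
    by (simp add: rho_add rho_pow IH flip: power_mult)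
  have r2: "rho (b^2*(a+c)^2) = 0" by (simp add: rho_mult rho_pow IH)
  have r3: "rho ((b^2+c^2)^2) = varW^(4^Suc n)"
    by (simp add: rho_add rho_pow IH flip: power_mult)
  have "rho (a+c) \<noteq> 0"
  proof
    assume "rho (a+c) = 0"
    then have "Poly_Mapping.lookup (rho (a+c)) (?N,0,0) = 0" by simp
    moreover have "(?N,0::nat,0::nat) \<noteq> (0,0,?N)" by simp
    ultimately show False by (simp add: rho_add IH U_pow W_pow lookup_add lookup_single)
  qed
  then have "a + c \<noteq> 0" using rho_zero by auto
  then have "b^2*(a+c)^2 \<noteq> 0" using IH(7) by (simp add: mp_mult_eq_0 mp_pow_nz)
  then show ?case using h1 h2 h3 r1 r2 r3 unfolding R_step abc by simp
qed

lemma cpow: "[:a:]^n = [:(a::'a::comm_semiring_1)^n:]"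
  by (rule poly_const_pow)

lemma UW_coprime:
  assumes "x dvd varU^N" "x dvd varW^N"
  shows "x dvd (1::mpoly3)"
proof -
  have d1: "phi x dvd [:[:[:0,1:]^N:]:]" using assms(1) phi_dvd[of x "varU^N"] by (simp add: phi_pow phi_U cpow)
  have d2: "phi x dvd [:[:0,1:]^N:]" using assms(2) phi_dvd[of x "varW^N"] by (simp add: phi_pow phi_W cpow)
  have "degree (phi x) = 0" using dvd_imp_degree_le[OF d1] by simp
  then obtain q where q: "phi x = [:q:]" by (metis degree_0_id)
  have d1': "q dvd [:[:0,1:]^N:]" using d1 unfolding q const_poly_dvd_const_poly_iff .
  have d2': "q dvd [:0,1:]^N" using d2 unfolding q const_poly_dvd_const_poly_iff .
  have "degree q = 0" using dvd_imp_degree_le[OF d1'] by simp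
  then obtain r where r: "q = [:r:]" by (metis degree_0_id)
  have "r dvd coeff ([:0,1:]^N) N" using d2' unfolding r const_poly_dvd_iff by blast
  moreover have "coeff ([:0::complex poly,1:]^N) N = 1" using coeff_linear_power[of "0::complex poly" N] by simp
  ultimately have "is_unit r" by simp
  then have "is_unit q" unfolding r is_unit_poly_iff by blast
  then have "is_unit (phi x)" unfolding q is_unit_poly_iff by blast
  then show ?thesis using phi_unit by blast
qed

lemma Rlift_reduced:
  assumes "Rlift_iter n = (a,b,c)"
  shows "\<forall>h. h dvd a \<and> h dvd b \<and> h dvd c \<longrightarrow> h dvd 1"
proof (intro allI impI)
  fix h assume hd: "h dvd a \<and> h dvd b \<and> h dvd c"
  let ?N = "(4::nat)^n"
  have P: "homogeneous3 ?N a" "rho a = varU^?N" "rho c = varW^?N"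
    using R_props[of n] assms by auto
  have U0: "varU^?N \<noteq> 0" by (simp add: U_pow) (metis lookup_single_eq lookup_zero one_neq_zero)
  then have a0: "a \<noteq> 0" using P rho_zero by auto
  obtain k where k: "h * k = a" using hd by (auto elim: dvdE)
  then obtain e where he: "homogeneous3 e h" using hom_divisor a0 P(1) by blast
  have "rho h dvd varU^?N" using hd P by (metis dvd_def rho_mult)
  moreover have "rho h dvd varW^?N" using hd P by (metis dvd_def rho_mult)
  ultimately have "rho h dvd 1" by (rule UW_coprime)
  then obtain z where z: "z \<noteq> 0" "rho h = const3 z" using mp_unit by blast
  have "homogeneous3 (e*1) (rho h)" unfolding rho_def by (intro hom_subst he hom_U hom_W hom_0)
  then have "e = 0" using z by (auto simp: const3_def homogeneous3_def)
  then have keys: "Poly_Mapping.keys h \<subseteq> {(0,0,0)}" using he by (auto simp: homogeneous3_def)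
  have "h = (\<Sum>k\<in>Poly_Mapping.keys h. Poly_Mapping.single k (Poly_Mapping.lookup h k))" by (rule pm_expand)
  also have "\<dots> = (\<Sum>k\<in>{(0,0,0)}. Poly_Mapping.single k (Poly_Mapping.lookup h k))"
    by (rule sum.mono_neutral_left) (use keys in \<open>auto simp: in_keys_iff\<close>)
  finally have hc: "h = const3 (Poly_Mapping.lookup h (0,0,0))" by (simp add: const3_def)
  have "h \<noteq> 0" using k a0 by auto
  then have "Poly_Mapping.lookup h (0,0,0) \<noteq> 0" using hc by auto
  then show "h dvd 1" using hc mp_unit by blast
qed

lemma UW_mono: "const3 z * ((varU^N)^a * (varW^N)^c) = Poly_Mapping.single (N*a, 0, N*c) z"
proof -
  have 1: "(varU^N)^a = Poly_Mapping.single (a*N,0,0) (1::complex)"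
    unfolding U_pow single_pow3 by simp
  have 2: "(varW^N)^c = Poly_Mapping.single (0,0,c*N) (1::complex)"
    unfolding W_pow single_pow3 by simp
  show ?thesis unfolding 1 2 const3_def mult_single by (simp add: mult.commute)
qed

lemma dominance:
  assumes p0: "p \<noteq> 0" and b0: "f1 \<noteq> 0" and r0: "rho f0 = varU^N" and r1: "rho f1 = 0"
    and r2: "rho f2 = varW^N" and N: "N > 0"
  shows "subst3 p (f0,f1,f2) \<noteq> 0"
proof
  assume Z: "subst3 p (f0,f1,f2) = 0"
  let ?K = "Poly_Mapping.keys p"
  let ?c = "Poly_Mapping.lookup p"
  have finK: "finite ?K" by simp
  have neK: "?K \<noteq> {}" using p0 by simp
  define B where "B = Min ((\<lambda>k. fst (snd k)) ` ?K)"
  have "B \<in> (\<lambda>k. fst (snd k)) ` ?K" unfolding B_def using finK neK by (intro Min_in) auto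
  then obtain k0 where k0: "k0 \<in> ?K" "fst (snd k0) = B" by auto
  have Ble: "B \<le> fst (snd k)" if "k \<in> ?K" for k using that B_def finK by simp
  define K0 where "K0 = {k\<in>?K. fst (snd k) = B}"
  define K1 where "K1 = ?K - K0"
  define t where "t k = const3 (?c k) * (f0 ^ fst k * f1 ^ fst (snd k) * f2 ^ snd (snd k))" for k
  define u where "u k = const3 (?c k) * (f0 ^ fst k * f2 ^ snd (snd k))" for k
  define v where "v k = const3 (?c k) * (f0 ^ fst k * f1 ^ (fst (snd k) - B - 1) * f2 ^ snd (snd k))" for k
  have tu: "t k = f1^B * u k" if "k \<in> K0" for k
    using that by (simp add: t_def u_def K0_def ac_simps)
  have tv: "t k = f1^B * (f1 * v k)" if "k \<in> K1" for k
  proof -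
    have "fst (snd k) \<noteq> B" "k \<in> ?K" using that by (auto simp: K1_def K0_def)
    then have "fst (snd k) = B + 1 + (fst (snd k) - B - 1)" using Ble[of k] by linarith
    then have "f1 ^ fst (snd k) = f1 ^ (B + 1 + (fst (snd k) - B - 1))" by (rule arg_cong)
    also have "\<dots> = f1^B * (f1 * f1 ^ (fst (snd k) - B - 1))"
      by (simp only: power_add power_one_right mult.assoc)
    finally have "f1 ^ fst (snd k) = f1^B * (f1 * f1 ^ (fst (snd k) - B - 1))" .
    then show ?thesis by (simp add: t_def v_def ac_simps)
  qed
  have "subst3 p (f0,f1,f2) = sum t ?K" by (simp add: subst3_expl t_def)
  also have "\<dots> = sum t K0 + sum t K1"
    unfolding K1_def by (subst add.commute, rule sum.subset_diff) (auto simp: K0_def)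
  also have "\<dots> = f1^B * (sum u K0 + f1 * sum v K1)"
    by (simp add: tu tv sum_distrib_left distrib_left cong: sum.cong)
  finally have "f1^B * (sum u K0 + f1 * sum v K1) = 0" using Z by simp
  then have S: "sum u K0 + f1 * sum v K1 = 0" using mp_pow_nz[OF b0] by (simp add: mp_mult_eq_0)
  have "rho (sum u K0) = 0"
    using arg_cong[OF S, of rho] by (simp add: rho_add rho_mult r1 rho_zero)
  moreover have eqS: "rho (sum u K0) = (\<Sum>k\<in>K0. Poly_Mapping.single (N * fst k, 0, N * snd (snd k)) (?c k))"
    unfolding rho_sum
  proof (rule sum.cong[OF refl])
    fix k
    have "rho (u k) = const3 (?c k) * ((varU^N)^fst k * (varW^N)^snd (snd k))"
      by (simp only: u_def rho_mult rho_pow rho_const r0 r2)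
    also have "\<dots> = Poly_Mapping.single (N * fst k, 0, N * snd (snd k)) (?c k)"
      by (rule UW_mono)
    finally show "rho (u k) = Poly_Mapping.single (N * fst k, 0, N * snd (snd k)) (?c k)" .
  qed
  ultimately have S0: "(\<Sum>k\<in>K0. Poly_Mapping.single (N * fst k, 0::nat, N * snd (snd k)) (?c k)) = 0"
    by simp
  have "Poly_Mapping.lookup (\<Sum>k\<in>K0. Poly_Mapping.single (N * fst k, 0::nat, N * snd (snd k)) (?c k)) (N * fst k0, 0, N * snd (snd k0))
     = (\<Sum>k\<in>K0. if k = k0 then ?c k else 0)"
    unfolding lookup_sum
  proof (rule sum.cong[OF refl])
    fix k assume "k \<in> K0"
    then have "fst (snd k) = fst (snd k0)" using k0 by (simp add: K0_def)
    then have "(N * fst k, 0::nat, N * snd (snd k)) = (N * fst k0, 0, N * snd (snd k0)) \<longleftrightarrow> k = k0"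
      using N by (cases k; cases k0) auto
    then show "Poly_Mapping.lookup (Poly_Mapping.single (N * fst k, 0, N * snd (snd k)) (?c k)) (N * fst k0, 0, N * snd (snd k0)) = (if k = k0 then ?c k else 0)"
      by (simp add: lookup_single when_def)
  qed
  also have "\<dots> = ?c k0" using k0 finK by (simp add: sum.delta K0_def)
  finally have "?c k0 = 0" using S0 by simp
  then show False using k0 by (simp add: in_keys_iff)
qed

lemma gcd3_mult: "gcd (x*a) (gcd (x*b) (x*c)) = normalize (x * gcd a (gcd b (c::T3)))"
  by (simp add: gcd_mult_left)

lemma assoc_unit:
  assumes "normalize (A::T3) = normalize B" "A \<noteq> 0"
  shows "\<exists>y. is_unit y \<and> B = A * y"
proof -
  have "A dvd normalize A" by simp
  then have "A dvd normalize B" unfolding assms(1) .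
  then have "A dvd B" by simp
  then obtain y where y: "B = A * y" by (auto elim: dvdE)
  have "B dvd normalize B" by simp
  then have "B dvd normalize A" unfolding assms(1) .
  then have "B dvd A" by simp
  then obtain y' where y': "A = B * y'" by (auto elim: dvdE)
  have "A * (y * y') = A * 1" using y y' by (simp add: mult.assoc[symmetric])
  then have "y * y' = 1" using assms(2) by (simp only: mult_cancel_left) simp
  then have "is_unit y" by (rule dvdI[OF sym])
  then show ?thesis using y by blast
qed

lemma gcd3_unit:
  assumes "\<forall>h. h dvd a \<and> h dvd b \<and> h dvd c \<longrightarrow> h dvd 1"
  shows "is_unit (gcd (phi a) (gcd (phi b) (phi c)))"
proof -
  let ?g = "gcd (phi a) (gcd (phi b) (phi c))"
  obtain h where h: "phi h = ?g" using phi_surj by blast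
  have g1: "?g dvd phi a" by (rule gcd_dvd1)
  have "?g dvd gcd (phi b) (phi c)" by (rule gcd_dvd2)
  then have g2: "?g dvd phi b" and g3: "?g dvd phi c" using dvd_trans gcd_dvd1 gcd_dvd2 by blast+
  have "h dvd a" "h dvd b" "h dvd c" using g1 g2 g3 unfolding h[symmetric] phi_dvd by auto
  then have "h dvd 1" using assms by blast
  then show ?thesis unfolding h[symmetric] phi_unit .
qed

lemma main_prop:
  fixes p :: mpoly3 and d n :: nat
  assumes "p \<noteq> 0" and "0 < d" and "homogeneous3 d p"
  shows "(\<exists>G. reduced_lift_Rn n G)
       \<and> (\<forall>G. reduced_lift_Rn n G \<longrightarrow>
              subst3 p G \<noteq> 0 \<and> homogeneous3 (d * 4 ^ n) (subst3 p G))"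
proof -
  obtain a b c where abc: "Rlift_iter n = (a,b,c)" by (cases "Rlift_iter n") auto
  let ?N = "(4::nat)^n"
  have P: "homogeneous3 ?N a" "homogeneous3 ?N b" "homogeneous3 ?N c" "rho a = varU^?N" "rho b = 0"
    "rho c = varW^?N" "b \<noteq> 0" using R_props[of n] abc by auto
  have U0: "varU^?N \<noteq> 0" unfolding U_pow by (metis lookup_single_eq lookup_zero one_neq_zero)
  then have a0: "a \<noteq> 0" using P rho_zero by auto
  have red: "\<forall>h. h dvd a \<and> h dvd b \<and> h dvd c \<longrightarrow> h dvd 1" by (rule Rlift_reduced[OF abc])
  have ex: "reduced_lift_Rn n (a,b,c)"
    unfolding reduced_lift_Rn_def abc using P a0 red by (auto simp: mult.commute)
  have dom: "subst3 p (a,b,c) \<noteq> 0"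
    by (rule dominance[OF assms(1) P(7) P(4) P(5) P(6)]) simp
  have univ: "subst3 p G \<noteq> 0 \<and> homogeneous3 (d * 4 ^ n) (subst3 p G)" if G: "reduced_lift_Rn n G" for G
  proof -
    obtain g0 g1 g2 where Gg: "G = (g0,g1,g2)" by (cases G) auto
    have redg: "\<forall>h. h dvd g0 \<and> h dvd g1 \<and> h dvd g2 \<longrightarrow> h dvd 1"
      and c1: "g0 * b = g1 * a" and c2: "g0 * c = g2 * a"
      using G unfolding Gg reduced_lift_Rn_def abc by auto
    let ?A = "phi a" let ?B = "phi b" let ?C = "phi c"
    let ?G0 = "phi g0" let ?G1 = "phi g1" let ?G2 = "phi g2"
    have uF: "is_unit (gcd ?A (gcd ?B ?C))" by (rule gcd3_unit[OF red])
    have uG: "is_unit (gcd ?G0 (gcd ?G1 ?G2))" by (rule gcd3_unit[OF redg])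
    have e1': "?G0 * ?B = ?G1 * ?A" using arg_cong[OF c1, of phi] unfolding phi_mult .
    have e2': "?G0 * ?C = ?G2 * ?A" using arg_cong[OF c2, of phi] unfolding phi_mult .
    have e1: "?A * ?G1 = ?G0 * ?B" unfolding e1' by (rule mult.commute)
    have e2: "?A * ?G2 = ?G0 * ?C" unfolding e2' by (rule mult.commute)
    have e0: "?A * ?G0 = ?G0 * ?A" by (rule mult.commute)
    have "normalize ?A = normalize (?A * gcd ?G0 (gcd ?G1 ?G2))" using uG by simp
    also have "\<dots> = gcd (?A * ?G0) (gcd (?A * ?G1) (?A * ?G2))" by (rule gcd3_mult[symmetric])
    also have "\<dots> = gcd (?G0 * ?A) (gcd (?G0 * ?B) (?G0 * ?C))" unfolding e0 e1 e2 ..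
    also have "\<dots> = normalize (?G0 * gcd ?A (gcd ?B ?C))" by (rule gcd3_mult)
    also have "\<dots> = normalize ?G0" using uF by simp
    finally have "normalize ?A = normalize ?G0" .
    moreover have "?A \<noteq> 0" using a0 phi_eq_0 by auto
    ultimately obtain y where y: "is_unit y" "?G0 = ?A * y" using assoc_unit by blast
    obtain z where z: "z \<noteq> 0" "y = [:[:[:z:]:]:]" using y(1) T3_unit by blast
    have "phi g0 = phi (a * const3 z)" using y(2) z(2) by (simp add: phi_mult phi_const3)
    then have g0: "g0 = const3 z * a" by (metis phi_inj mult.commute)
    have "a * g1 = a * (const3 z * b)"
    proof -
      have "a * g1 = g1 * a" by (rule mult.commute)
      also have "\<dots> = g0 * b" using c1 by simp
      also have "\<dots> = a * (const3 z * b)" unfolding g0 by (simp add: ac_simps)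
      finally show ?thesis .
    qed
    then have g1: "g1 = const3 z * b" using a0 mp_mult_cancel by blast
    have "a * g2 = a * (const3 z * c)"
    proof -
      have "a * g2 = g2 * a" by (rule mult.commute)
      also have "\<dots> = g0 * c" using c2 by simp
      also have "\<dots> = a * (const3 z * c)" unfolding g0 by (simp add: ac_simps)
      finally show ?thesis .
    qed
    then have g2: "g2 = const3 z * c" using a0 mp_mult_cancel by blast
    have sG: "subst3 p G = const3 (z^d) * subst3 p (a,b,c)"
      unfolding Gg g0 g1 g2 by (rule subst3_scale[OF assms(3)])
    have "const3 (z^d) \<noteq> 0" using z(1) unfolding const3_def
      by (metis lookup_single_eq lookup_zero power_not_zero)
    then have nz: "subst3 p G \<noteq> 0" using dom sG mp_mult_eq_0 by metis
    have "homogeneous3 (0 + d * ?N) (const3 (z^d) * subst3 p (a,b,c))"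
      by (intro hom_mult hom_const hom_subst assms(3) P(1-3))
    then show ?thesis using nz sG by simp
  qed
  show ?thesis using ex univ by blast
qed

theorem corollary4p5:
  fixes p :: mpoly3 and d n :: nat
  assumes "p \<noteq> 0" and "0 < d" and "homogeneous3 d p"
  shows "(\<exists>G. reduced_lift_Rn n G)
       \<and> (\<forall>G. reduced_lift_Rn n G \<longrightarrow>
              subst3 p G \<noteq> 0 \<and> homogeneous3 (d * 4 ^ n) (subst3 p G))"
  by (rule main_prop[OF assms])

end
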